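(* Let $\Gamma$ be a discrete subgroup of $E(n)$, and let $A=\lambda A'$, where $A'\in O(n)$ and $\lambda>0$. Suppose that $A\Gamma A^{-1}\subset\Gamma$ and $\lambda\le1$. Then $A\Gamma A^{-1}=\Gamma$.
   Context: $E(n)$ denotes the group of isometries of $\mathbb{R}^n$ (maps $x\mapsto Bx+b$, $B\in O(n)$, $b\in\mathbb{R}^n$) with the topology of $O(n)\times\mathbb{R}^n$; discreteness refers to this topology. $A\Gamma A^{-1}=\{A\circ\gamma\circ A^{-1}:\gamma\in\Gamma\}$. *)

theory Defs
  imports "HOL-Analysis.Analysis"
begin

text \<open>An element of E(n) is encoded as a pair (B, b) with B an orthogonal matrix;
  it acts as the map x \<mapsto> B x + b. The topology on such pairs is the product
  topology of the matrix space and R^n (restricted to O(n) x R^n).\<close>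

definition isom :: "((real^'n^'n) \<times> (real^'n)) \<Rightarrow> (real^'n \<Rightarrow> real^'n)" where
  "isom g = (\<lambda>x. fst g *v x + snd g)"

definition Euclid_group :: "((real^'n^'n) \<times> (real^'n)) set" where
  "Euclid_group = {g. orthogonal_matrix (fst g)}"

definition subgroup_E :: "((real^'n^'n) \<times> (real^'n)) set \<Rightarrow> bool" where
  "subgroup_E \<Gamma> \<longleftrightarrow> \<Gamma> \<subseteq> Euclid_group \<and> id \<in> isom ` \<Gamma> \<and>
     (\<forall>g\<in>\<Gamma>. \<forall>h\<in>\<Gamma>. isom g \<circ> isom h \<in> isom ` \<Gamma>) \<and>
     (\<forall>g\<in>\<Gamma>. inv (isom g) \<in> isom ` \<Gamma>)"

definition conj_set :: "real^'n^'n \<Rightarrow> ((real^'n^'n) \<times> (real^'n)) set \<Rightarrow> (real^'n \<Rightarrow> real^'n) set" where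
  "conj_set A \<Gamma> = {(\<lambda>x. A *v x) \<circ> isom \<gamma> \<circ> (\<lambda>x. matrix_inv A *v x) | \<gamma>. \<gamma> \<in> \<Gamma>}"

end

theory Submission
  imports Defs
begin

lemma isom_inj: "isom g = isom h \<Longrightarrow> g = h"
proof -
  assume e: "isom g = isom h"
  have s: "snd g = snd h" using fun_cong[OF e, of 0] by (simp add: isom_def)
  have "\<forall>x. fst g *v x = fst h *v x" using e s by (auto simp: isom_def dest: fun_cong)
  then have "fst g = fst h" by (simp add: matrix_eq)
  with s show ?thesis by (simp add: prod_eq_iff)
qed

lemma orth_entry: assumes "orthogonal_matrix (B::real^'n^'n)" shows "\<bar>B$i$j\<bar> \<le> 1"
proof -
  have "norm (row i B) = 1" using assms orthogonal_matrix_orthonormal_rows by blast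
  moreover have "\<bar>(row i B)$j\<bar> \<le> norm (row i B)" by (rule component_le_norm_cart)
  ultimately show ?thesis by (simp add: row_def)
qed

lemma mv_bound: assumes "\<And>i j. \<bar>(P::real^'n^'n)$i$j\<bar> \<le> 1"
  shows "norm (P *v v) \<le> real CARD('n) * real CARD('n) * norm v"
proof -
  have "norm (P *v v) \<le> (\<Sum>i\<in>UNIV. \<bar>(P *v v)$i\<bar>)" by (rule norm_le_l1_cart)
  also have "\<dots> \<le> (\<Sum>i\<in>(UNIV::'n set). real CARD('n) * norm v)"
  proof (rule sum_mono)
    fix i
    have "\<bar>(P *v v)$i\<bar> = \<bar>\<Sum>k\<in>UNIV. P$i$k * v$k\<bar>" by (simp add: matrix_vector_mult_def)
    also have "\<dots> \<le> (\<Sum>k\<in>UNIV. \<bar>P$i$k * v$k\<bar>)" by (rule sum_abs)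
    also have "\<dots> \<le> (\<Sum>k\<in>(UNIV::'n set). norm v)"
    proof (rule sum_mono)
      fix k
      have "\<bar>P$i$k * v$k\<bar> \<le> 1 * \<bar>v$k\<bar>" unfolding abs_mult
        by (rule mult_right_mono[OF assms]) simp
      then show "\<bar>P$i$k * v$k\<bar> \<le> norm v" using component_le_norm_cart[of v k] by simp
    qed
    finally show "\<bar>(P *v v)$i\<bar> \<le> real CARD('n) * norm v" by simp
  qed
  finally show ?thesis by simp
qed

lemma norm_le_l1_gen: "norm (x::'a::real_normed_vector^'n) \<le> (\<Sum>i\<in>UNIV. norm (x$i))"
  by (simp add: norm_vec_def L2_set_le_sum)

lemma mm_bound: assumes "\<And>i j. \<bar>(P::real^'n^'n)$i$j\<bar> \<le> 1"
  shows "norm (P ** (M::real^'n^'n)) \<le> real CARD('n) * real CARD('n) * real CARD('n) * norm M"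
proof -
  have e: "\<bar>(P ** M)$i$j\<bar> \<le> real CARD('n) * norm M" for i j
  proof -
    have "\<bar>(P ** M)$i$j\<bar> = \<bar>\<Sum>k\<in>UNIV. P$i$k * M$k$j\<bar>" by (simp add: matrix_matrix_mult_def)
    also have "\<dots> \<le> (\<Sum>k\<in>UNIV. \<bar>P$i$k * M$k$j\<bar>)" by (rule sum_abs)
    also have "\<dots> \<le> (\<Sum>k\<in>(UNIV::'n set). norm M)"
    proof (rule sum_mono)
      fix k
      have "\<bar>P$i$k * M$k$j\<bar> \<le> 1 * \<bar>M$k$j\<bar>" unfolding abs_mult
        by (rule mult_right_mono[OF assms]) simp
      moreover have "\<bar>M$k$j\<bar> \<le> norm (M$k)" by (rule component_le_norm_cart)
      moreover have "norm (M$k) \<le> norm M" by (rule Finite_Cartesian_Product.norm_nth_le)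
      ultimately show "\<bar>P$i$k * M$k$j\<bar> \<le> norm M" by simp
    qed
    finally show ?thesis by simp
  qed
  have "norm (P ** M) \<le> (\<Sum>i\<in>UNIV. norm ((P ** M)$i))" by (rule norm_le_l1_gen)
  also have "\<dots> \<le> (\<Sum>i\<in>(UNIV::'n set). real CARD('n) * real CARD('n) * norm M)"
  proof (rule sum_mono)
    fix i
    have "norm ((P ** M)$i) \<le> (\<Sum>j\<in>UNIV. \<bar>(P ** M)$i$j\<bar>)" by (rule norm_le_l1_cart)
    also have "\<dots> \<le> (\<Sum>j\<in>(UNIV::'n set). real CARD('n) * norm M)" by (intro sum_mono e)
    finally show "norm ((P ** M)$i) \<le> real CARD('n) * real CARD('n) * norm M" by simp
  qed
  finally show ?thesis by simp
qed


lemma isom_comp: "isom g \<circ> isom h = isom (fst g ** fst h, fst g *v snd h + snd g)"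
  by (rule ext) (simp add: isom_def matrix_vector_mul_assoc matrix_vector_right_distrib)

lemma isom_inv: assumes "orthogonal_matrix B"
  shows "inv (isom (B,b)) = isom (transpose B, - (transpose B *v b))"
proof (rule inv_unique_comp)
  have 1: "transpose B ** B = mat 1" and 2: "B ** transpose B = mat 1"
    using assms by (auto simp: orthogonal_matrix_def)
  show "isom (B, b) \<circ> isom (transpose B, - (transpose B *v b)) = id"
  proof (rule ext)
    fix x
    have "B *v (transpose B *v x) = x" by (metis matrix_vector_mul_assoc 2 matrix_vector_mul_lid)
    moreover have "B *v (transpose B *v b) = b" by (metis matrix_vector_mul_assoc 2 matrix_vector_mul_lid)
    ultimately show "(isom (B, b) \<circ> isom (transpose B, - (transpose B *v b))) x = id x"
      by (simp add: isom_def matrix_vector_right_distrib matrix_vector_mult_diff_distrib)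
  qed
  show "isom (transpose B, - (transpose B *v b)) \<circ> isom (B, b) = id"
  proof (rule ext)
    fix x
    have "transpose B *v (B *v x) = x" by (metis matrix_vector_mul_assoc 1 matrix_vector_mul_lid)
    have "(isom (transpose B, - (transpose B *v b)) \<circ> isom (B, b)) x = transpose B *v (B *v x + b) + - (transpose B *v b)"
      unfolding isom_def o_def by (simp only: fst_conv snd_conv)
    also have "\<dots> = transpose B *v (B *v x) + transpose B *v b + - (transpose B *v b)"
      by (simp only: matrix_vector_right_distrib)
    also have "\<dots> = x" using \<open>transpose B *v (B *v x) = x\<close> by simp
    finally show "(isom (transpose B, - (transpose B *v b)) \<circ> isom (B, b)) x = id x" by simp
  qed
qed

lemma sub_id: assumes "subgroup_E \<Gamma>" shows "(mat 1, 0) \<in> \<Gamma>"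
proof -
  obtain e where "e \<in> \<Gamma>" "isom e = id" using assms unfolding subgroup_E_def by auto
  moreover have "isom (mat 1, 0) = id" by (simp add: isom_def id_def)
  ultimately show ?thesis using isom_inj by metis
qed

lemma sub_diff: assumes "subgroup_E \<Gamma>" "g \<in> \<Gamma>" "h \<in> \<Gamma>"
  shows "(transpose (fst g) ** fst h, transpose (fst g) *v (snd h - snd g)) \<in> \<Gamma>"
proof -
  have sE: "\<Gamma> \<subseteq> Euclid_group" and cl: "\<forall>g\<in>\<Gamma>. \<forall>h\<in>\<Gamma>. isom g \<circ> isom h \<in> isom ` \<Gamma>"
    and il: "\<forall>g\<in>\<Gamma>. inv (isom g) \<in> isom ` \<Gamma>"
    using assms(1) unfolding subgroup_E_def by simp_all
  have og: "orthogonal_matrix (fst g)" using sE assms(2) unfolding Euclid_group_def by auto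
  have "inv (isom g) \<in> isom ` \<Gamma>" using il assms(2) by (rule bspec)
  then obtain g' where g': "g' \<in> \<Gamma>" "inv (isom g) = isom g'" by (rule imageE)
  have "inv (isom g) = isom (transpose (fst g), - (transpose (fst g) *v snd g))"
    using isom_inv[OF og, of "snd g"] by simp
  with g' have g'e: "g' = (transpose (fst g), - (transpose (fst g) *v snd g))" using isom_inj by (metis (no_types))
  have "isom g' \<circ> isom h \<in> isom ` \<Gamma>" using cl g'(1) assms(3) by simp
  then obtain k where k: "k \<in> \<Gamma>" "isom g' \<circ> isom h = isom k" by (rule imageE)
  have "isom g' \<circ> isom h = isom (transpose (fst g) ** fst h, transpose (fst g) *v (snd h - snd g))"
    by (simp add: g'e isom_comp matrix_vector_mult_diff_distrib)
  with k have "isom k = isom (transpose (fst g) ** fst h, transpose (fst g) *v (snd h - snd g))" by simp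
  then have "k = (transpose (fst g) ** fst h, transpose (fst g) *v (snd h - snd g))" by (rule isom_inj)
  with k show ?thesis by simp
qed


lemma orth_row_norm: assumes "orthogonal_matrix (B::real^'n^'n)" shows "norm (B$i) = 1"
proof -
  have "row i B = B$i" by (simp add: row_def vec_eq_iff)
  moreover have "norm (row i B) = 1" using assms unfolding orthogonal_matrix_orthonormal_rows by simp
  ultimately show ?thesis by simp
qed

lemma orth_norm: assumes "orthogonal_matrix (B::real^'n^'n)" shows "norm B \<le> real CARD('n)"
proof -
  have "norm B \<le> (\<Sum>i\<in>UNIV. norm (B$i))" by (rule norm_le_l1_gen)
  also have "\<dots> = real CARD('n)" using orth_row_norm[OF assms] by simp
  finally show ?thesis .
qed

lemma fin_ball:
  fixes \<Gamma> :: "((real^'n^'n) \<times> (real^'n)) set"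
  assumes G: "subgroup_E \<Gamma>" and D: "discrete \<Gamma>"
  shows "finite {g\<in>\<Gamma>. norm (snd g) \<le> R}"
proof (rule ccontr)
  define S where "S = {g\<in>\<Gamma>. norm (snd g) \<le> R}"
  assume "infinite {g\<in>\<Gamma>. norm (snd g) \<le> R}"
  then have inf: "infinite S" by (simp add: S_def)
  define e0 :: "(real^'n^'n) \<times> (real^'n)" where "e0 = (mat 1, 0)"
  have e0: "e0 \<in> \<Gamma>" using sub_id[OF G] by (simp add: e0_def)
  have orth: "orthogonal_matrix (fst g)" if "g \<in> \<Gamma>" for g
    using G that unfolding subgroup_E_def Euclid_group_def by auto
  obtain \<epsilon> where \<epsilon>: "\<epsilon> > 0" "\<And>y. y \<in> \<Gamma> \<Longrightarrow> dist e0 y < \<epsilon> \<Longrightarrow> y = e0"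
    using discreteD[OF D e0] unfolding isolated_in_dist_Ex_iff by blast
  have "S \<subseteq> cball 0 (real CARD('n) + R)"
  proof
    fix g assume "g \<in> S"
    then have "g \<in> \<Gamma>" "norm (snd g) \<le> R" by (auto simp: S_def)
    have "norm g \<le> norm (fst g) + norm (snd g)" using norm_Pair_le[of "fst g" "snd g"] by simp
    also have "\<dots> \<le> real CARD('n) + R" using orth_norm[OF orth[OF \<open>g \<in> \<Gamma>\<close>]] \<open>norm (snd g) \<le> R\<close> by simp
    finally show "g \<in> cball 0 (real CARD('n) + R)" by simp
  qed
  then have "bounded S" using bounded_cball bounded_subset by blast
  then obtain x where x: "x islimpt S" using bounded_infinite_imp_islimpt[of S S] inf by blast
  define K where "K = real CARD('n) * real CARD('n) * real CARD('n) + real CARD('n) * real CARD('n) + 1"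
  have Kpos: "K > 0" by (simp add: K_def add_pos_nonneg)
  define \<delta> where "\<delta> = \<epsilon> / K / 2"
  have \<delta>: "\<delta> > 0" using \<epsilon> Kpos by (simp add: \<delta>_def)
  obtain g where g: "g \<in> S" "g \<noteq> x" "dist g x < \<delta>" using x \<delta> unfolding islimpt_approachable by blast
  have "dist g x > 0" using g by simp
  then obtain h where h: "h \<in> S" "h \<noteq> x" "dist h x < min \<delta> (dist g x)"
    using x \<delta> unfolding islimpt_approachable by (metis min_less_iff_conj)
  have gh: "g \<noteq> h" using h by auto
  have dgh: "dist g h < \<epsilon> / K"
  proof -
    have "dist g h \<le> dist g x + dist h x" by (metis dist_commute dist_triangle)
    also have "\<dots> < \<delta> + \<delta>" using g h by simp
    finally show ?thesis by (simp add: \<delta>_def)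
  qed
  have gG: "g \<in> \<Gamma>" and hG: "h \<in> \<Gamma>" using g h by (auto simp: S_def)
  obtain B b where gB: "g = (B, b)" by fastforce
  obtain B' b' where hB: "h = (B', b')" by fastforce
  have oB: "orthogonal_matrix B" using orth[OF gG] gB by simp
  have ent: "\<And>i j. \<bar>transpose B $ i $ j\<bar> \<le> 1" using orth_entry[of "transpose B"] oB by simp
  define k where "k = (transpose B ** B', transpose B *v (b' - b))"
  have kG: "k \<in> \<Gamma>" using sub_diff[OF G gG hG] by (simp add: k_def gB hB)
  have "k \<noteq> e0"
  proof
    assume "k = e0"
    then have 1: "transpose B ** B' = mat 1" and 2: "transpose B *v (b' - b) = 0"
      by (auto simp: k_def e0_def)
    have "B' = B ** (transpose B ** B')" using oB
      by (simp add: matrix_mul_assoc orthogonal_matrix_def)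
    then have "B' = B" using 1 by simp
    have "b' - b = B *v (transpose B *v (b' - b))" using oB
      by (metis matrix_vector_mul_assoc matrix_vector_mul_lid orthogonal_matrix_def)
    then have "b' = b" using 2 by simp
    with \<open>B' = B\<close> gh show False by (simp add: gB hB)
  qed
  moreover have "dist e0 k < \<epsilon>"
  proof -
    have "transpose B ** B = transpose B ** (B - B') + transpose B ** B'"
      by (metis matrix_add_ldistrib diff_add_cancel)
    moreover have "transpose B ** B = mat 1" using oB by (simp add: orthogonal_matrix_def)
    ultimately have m: "mat 1 - transpose B ** B' = transpose B ** (B - B')"
      by (metis add_diff_cancel_right')
    have nB: "norm (B - B') \<le> dist g h" and nb: "norm (b' - b) \<le> dist g h"
    proof -
      have "g - h = (B - B', b - b')" by (simp add: gB hB)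
      then have "dist g h = norm (B - B', b - b')" by (simp add: dist_norm)
      moreover have "norm (B - B') \<le> norm (B - B', b - b')" by (rule norm_fst_le)
      moreover have "norm (b - b') \<le> norm (B - B', b - b')" by (rule norm_snd_le)
      moreover have "norm (b' - b) = norm (b - b')" by (rule norm_minus_commute)
      ultimately show "norm (B - B') \<le> dist g h" "norm (b' - b) \<le> dist g h" by auto
    qed
    have "dist e0 k = norm (mat 1 - transpose B ** B', - (transpose B *v (b' - b)))"
      by (simp add: dist_norm e0_def k_def)
    also have "\<dots> \<le> norm (mat 1 - transpose B ** B') + norm (transpose B *v (b' - b))"
      using norm_Pair_le by (metis norm_minus_cancel)
    also have "\<dots> \<le> real CARD('n) * real CARD('n) * real CARD('n) * norm (B - B') + real CARD('n) * real CARD('n) * norm (b' - b)"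
      unfolding m by (intro add_mono mm_bound mv_bound ent)
    also have "\<dots> \<le> real CARD('n) * real CARD('n) * real CARD('n) * dist g h + real CARD('n) * real CARD('n) * dist g h"
      by (intro add_mono mult_left_mono nB nb) auto
    also have "\<dots> \<le> K * dist g h" by (simp add: K_def algebra_simps)
    also have "\<dots> < K * (\<epsilon> / K)" using dgh Kpos by (rule mult_strict_left_mono)
    also have "\<dots> = \<epsilon>" using Kpos by simp
    finally show ?thesis .
  qed
  ultimately show False using \<epsilon>(2)[OF kG] by blast
qed


lemma orth_norm_vec: assumes "orthogonal_matrix (A'::real^'n^'n)" shows "norm (A' *v v) = norm v"
proof -
  have "orthogonal_transformation ((*v) A')"
    using assms by (simp add: orthogonal_transformation_matrix matrix_vector_mul_linear)
  then show ?thesis by (simp add: orthogonal_transformation)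
qed

theorem mainTheorem12:
  fixes \<Gamma> :: "((real^'n^'n) \<times> (real^'n)) set"
    and A A' :: "real^'n^'n" and c :: real
  assumes "subgroup_E \<Gamma>" and "discrete \<Gamma>"
    and "orthogonal_matrix A'" and "c > 0" and "A = c *\<^sub>R A'"
    and "conj_set A \<Gamma> \<subseteq> isom ` \<Gamma>" and "c \<le> 1"
  shows "conj_set A \<Gamma> = isom ` \<Gamma>"
proof -
  note G = assms(1) and D = assms(2) and oA = assms(3) and cpos = assms(4) and Aeq = assms(5)
    and sub = assms(6) and c1 = assms(7)
  have t1: "transpose A' ** A' = mat 1" and t2: "A' ** transpose A' = mat 1"
    using oA by (auto simp: orthogonal_matrix_def)
  define W where "W = (1/c) *\<^sub>R transpose A'"
  have AW: "A ** W = mat 1" "W ** A = mat 1"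
    using cpos by (simp_all add: Aeq W_def matrix_scalar_ac scalar_matrix_assoc[symmetric] t1 t2)
  define X where "X = matrix_inv A"
  have "A ** X = mat 1 \<and> X ** A = mat 1"
    unfolding X_def matrix_inv_def by (rule someI[of _ W]) (simp add: AW)
  then have "X = W"
    by (metis AW(1) matrix_mul_assoc matrix_mul_lid matrix_mul_rid)
  define \<phi> where "\<phi> g = (A' ** fst g ** transpose A', c *\<^sub>R (A' *v snd g))" for g :: "(real^'n^'n) \<times> (real^'n)"
  have conj_eq: "(\<lambda>x. A *v x) \<circ> isom g \<circ> (\<lambda>x. matrix_inv A *v x) = isom (\<phi> g)" for g
  proof (rule ext)
    fix x
    have "((\<lambda>x. A *v x) \<circ> isom g \<circ> (\<lambda>x. matrix_inv A *v x)) x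
        = c *\<^sub>R (A' *v (fst g *v ((1/c) *\<^sub>R (transpose A' *v x)) + snd g))"
    proof -
      have "((\<lambda>x. A *v x) \<circ> isom g \<circ> (\<lambda>x. matrix_inv A *v x)) x = A *v (fst g *v (W *v x) + snd g)"
        unfolding X_def[symmetric] \<open>X = W\<close> by (simp add: isom_def)
      also have "\<dots> = c *\<^sub>R (A' *v (fst g *v ((1/c) *\<^sub>R (transpose A' *v x)) + snd g))"
        by (simp only: Aeq W_def scaleR_matrix_vector_assoc[symmetric])
      finally show ?thesis .
    qed
    also have "\<dots> = A' *v (fst g *v (transpose A' *v x)) + c *\<^sub>R (A' *v snd g)"
      using cpos by (simp add: matrix_vector_right_distrib matrix_vector_mult_scaleR scaleR_right_distrib del: vector_transpose_matrix)
    also have "\<dots> = isom (\<phi> g) x"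
      unfolding isom_def \<phi>_def by (simp only: fst_conv snd_conv matrix_vector_mul_assoc matrix_mul_assoc)
    finally show "((\<lambda>x. A *v x) \<circ> isom g \<circ> (\<lambda>x. matrix_inv A *v x)) x = isom (\<phi> g) x" .
  qed
  have cs: "conj_set A \<Gamma> = isom ` \<phi> ` \<Gamma>"
  proof -
    have "conj_set A \<Gamma> = {isom (\<phi> \<gamma>) | \<gamma>. \<gamma> \<in> \<Gamma>}" unfolding conj_set_def conj_eq by (rule refl)
    also have "\<dots> = isom ` \<phi> ` \<Gamma>" by (simp only: Setcompr_eq_image image_image)
    finally show ?thesis .
  qed
  have phiG: "\<phi> ` \<Gamma> \<subseteq> \<Gamma>"
  proof
    fix y assume "y \<in> \<phi> ` \<Gamma>"
    then have "isom y \<in> isom ` \<Gamma>" using sub cs by blast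
    then show "y \<in> \<Gamma>" using isom_inj by blast
  qed
  have inj: "inj \<phi>"
  proof (rule injI)
    fix g h assume e: "\<phi> g = \<phi> h"
    then have 1: "A' ** fst g ** transpose A' = A' ** fst h ** transpose A'"
      and 2: "c *\<^sub>R (A' *v snd g) = c *\<^sub>R (A' *v snd h)" by (auto simp: \<phi>_def)
    have "fst g = transpose A' ** (A' ** fst g ** transpose A') ** A'"
      by (simp add: matrix_mul_assoc t1 t2) (simp add: matrix_mul_assoc[symmetric] t1)
    also have "\<dots> = transpose A' ** (A' ** fst h ** transpose A') ** A'" using 1 by simp
    also have "\<dots> = fst h"
      by (simp add: matrix_mul_assoc t1 t2) (simp add: matrix_mul_assoc[symmetric] t1)
    finally have f: "fst g = fst h" .
    have "A' *v snd g = A' *v snd h" using 2 cpos by simp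
    then have "snd g = snd h"
      by (metis matrix_vector_mul_assoc matrix_vector_mul_lid t1)
    with f show "g = h" by (simp add: prod_eq_iff)
  qed
  have nphi: "norm (snd (\<phi> g)) \<le> norm (snd g)" for g
    using cpos c1 by (simp add: \<phi>_def orth_norm_vec[OF oA] mult_left_le_one_le)
  show ?thesis
  proof
    show "conj_set A \<Gamma> \<subseteq> isom ` \<Gamma>" by (rule sub)
    show "isom ` \<Gamma> \<subseteq> conj_set A \<Gamma>"
    proof
      fix y assume "y \<in> isom ` \<Gamma>"
      then obtain g where g: "g \<in> \<Gamma>" "y = isom g" by blast
      define S where "S = {h\<in>\<Gamma>. norm (snd h) \<le> norm (snd g)}"
      have fS: "finite S" unfolding S_def by (rule fin_ball[OF G D])
      have "\<phi> ` S \<subseteq> S"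
      proof
        fix y assume "y \<in> \<phi> ` S"
        then obtain h where h: "h \<in> S" "y = \<phi> h" by (rule imageE)
        then have "h \<in> \<Gamma>" "norm (snd h) \<le> norm (snd g)" by (simp_all add: S_def)
        then have "y \<in> \<Gamma>" "norm (snd y) \<le> norm (snd g)" using phiG nphi[of h] h(2) by auto
        then show "y \<in> S" by (simp add: S_def)
      qed
      then have "\<phi> ` S = S" using endo_inj_surj[OF fS] inj by (meson inj_on_subset subset_UNIV)
      moreover have "g \<in> S" using g by (simp add: S_def)
      ultimately obtain h where "h \<in> S" "g = \<phi> h" by (metis imageE)
      then have "y \<in> isom ` \<phi> ` \<Gamma>" using g by (auto simp: S_def)
      then show "y \<in> conj_set A \<Gamma>" using cs by simp
    qed
  qed
qed

end
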